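(* Let $n\ge1$, let $L\subseteq\mathbb Z^n$ be a lattice, and let $(\cdot,\cdot)$ be an inner product on $\mathbb R^n$ for which the canonical basis $\vec e_1,\dots,\vec e_n$ is orthogonal, such that $(L,(\cdot,\cdot))$ is a zonotopal lattice. Let $F$ be the span of $L$, let $\pi:\mathbb R^n\to F$ be the $(\cdot,\cdot)$-orthogonal projection, and let $Y=(\pi(\vec e_1),\dots,\pi(\vec e_n))$. Then the oriented matroids $\mathcal M(L)$ and $\mathcal M(Y)$ coincide, i.e. $$\{(\operatorname{sgn}v_1,\dots,\operatorname{sgn}v_n):\vec v\in L\}=\{(\operatorname{sgn}f(\pi(\vec e_1)),\dots,\operatorname{sgn}f(\pi(\vec e_n))): f:F\to\mathbb R\text{ linear}\}.$$
   Context: A lattice $L\subseteq\mathbb Z^n$ is the $\mathbb Z$-span of finitely many linearly independent vectors of $\mathbb Z^n$. The support of $\vec v$ is $\underline{\vec v}=\{i:v_i\ne0\}$. A vector $\vec u\in L$ is elementary if $\vec u\in\{-1,0,+1\}^n\setminus\{\vec 0\}$ and no nonzero vector of $L$ has support strictly contained in $\underline{\vec u}$. $(L,(\cdot,\cdot))$ is a zonotopal lattice if every $\vec v\in L\setminus\{\vec0\}$ has an elementary $\vec u\in L$ with $\underline{\vec u}\subseteq\underline{\vec v}$. The oriented matroid $\mathcal M(L)$ has covectors the sign vectors of vectors of $L$; the oriented matroid $\mathcal M(Y)$ of a vector configuration $Y=(\vec y_1,\dots,\vec y_n)$ has covectors $(\operatorname{sgn}f(\vec y_1),\dots,\operatorname{sgn}f(\vec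 y_n))$ for linear functionals $f$; two oriented matroids coincide if their covector sets are equal. *)

theory Defs
  imports "HOL-Analysis.Analysis"
begin

text \<open>Vectors of R^n are modelled as real^'n, with 'n a finite index type (n = CARD('n) \<ge> 1).\<close>

definition is_lattice :: "(real^'n) set \<Rightarrow> bool" where
  "is_lattice L \<longleftrightarrow> (\<exists>B. finite B \<and> independent B \<and> (\<forall>b\<in>B. \<forall>i. b$i \<in> \<int>) \<and>
      L = {(\<Sum>b\<in>B. c b *\<^sub>R b) | c. \<forall>b\<in>B. c b \<in> \<int>})"

definition supp :: "real^'n \<Rightarrow> 'n set" where
  "supp v = {i. v$i \<noteq> 0}"

definition elementary :: "(real^'n) set \<Rightarrow> real^'n \<Rightarrow> bool" where
  "elementary L u \<longleftrightarrow> u \<in> L \<and> (\<forall>i. u$i \<in> {-1, 0, 1}) \<and> u \<noteq> 0 \<and>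
      \<not> (\<exists>v\<in>L. v \<noteq> 0 \<and> supp v \<subset> supp u)"

definition zonotopal_lattice :: "(real^'n) set \<Rightarrow> bool" where
  "zonotopal_lattice L \<longleftrightarrow> (\<forall>v\<in>L. v \<noteq> 0 \<longrightarrow> (\<exists>u. elementary L u \<and> supp u \<subseteq> supp v))"

definition is_inner_product :: "(real^'n \<Rightarrow> real^'n \<Rightarrow> real) \<Rightarrow> bool" where
  "is_inner_product ip \<longleftrightarrow> bilinear ip \<and> (\<forall>x y. ip x y = ip y x) \<and> (\<forall>x. x \<noteq> 0 \<longrightarrow> ip x x > 0)"

definition orth_proj :: "(real^'n \<Rightarrow> real^'n \<Rightarrow> real) \<Rightarrow> (real^'n) set \<Rightarrow> real^'n \<Rightarrow> real^'n" where
  "orth_proj ip F x = (THE p. p \<in> F \<and> (\<forall>y\<in>F. ip (x - p) y = 0))"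

text \<open>f is a linear functional on the subspace F (values outside F are irrelevant).\<close>
definition linear_on_subspace :: "(real^'n) set \<Rightarrow> (real^'n \<Rightarrow> real) \<Rightarrow> bool" where
  "linear_on_subspace F f \<longleftrightarrow> (\<forall>x\<in>F. \<forall>y\<in>F. f (x + y) = f x + f y) \<and>
      (\<forall>c. \<forall>x\<in>F. f (c *\<^sub>R x) = c * f x)"

end

theory Submission
  imports Defs
begin

definition QB :: "(real^'n) set \<Rightarrow> real^'n \<Rightarrow> bool" where
  "QB B x \<longleftrightarrow> (\<exists>c. (\<forall>b\<in>B. c b \<in> \<rat>) \<and> x = (\<Sum>b\<in>B. c b *\<^sub>R b))"

lemma QB_add: "finite B \<Longrightarrow> QB B x \<Longrightarrow> QB B y \<Longrightarrow> QB B (x + y)"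
  unfolding QB_def
proof (elim exE conjE)
  fix c d assume "finite B" "\<forall>b\<in>B. c b \<in> \<rat>" "x = (\<Sum>b\<in>B. c b *\<^sub>R b)" "\<forall>b\<in>B. d b \<in> \<rat>" "y = (\<Sum>b\<in>B. d b *\<^sub>R b)"
  then show "\<exists>e. (\<forall>b\<in>B. e b \<in> \<rat>) \<and> x + y = (\<Sum>b\<in>B. e b *\<^sub>R b)"
    by (intro exI[of _ "\<lambda>b. c b + d b"]) (auto simp: scaleR_add_left sum.distrib)
qed

lemma QB_scale: "QB B x \<Longrightarrow> q \<in> \<rat> \<Longrightarrow> QB B (q *\<^sub>R x)"
  unfolding QB_def
proof (elim exE conjE)
  fix c assume "\<forall>b\<in>B. c b \<in> \<rat>" "x = (\<Sum>b\<in>B. c b *\<^sub>R b)" "q \<in> \<rat>"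
  then show "\<exists>e. (\<forall>b\<in>B. e b \<in> \<rat>) \<and> q *\<^sub>R x = (\<Sum>b\<in>B. e b *\<^sub>R b)"
    by (intro exI[of _ "\<lambda>b. q * c b"]) (auto simp: scaleR_sum_right)
qed

lemma QB_diff: "finite B \<Longrightarrow> QB B x \<Longrightarrow> QB B y \<Longrightarrow> QB B (x - y)"
  using QB_add[of B x "(-1) *\<^sub>R y"] QB_scale[of B y "-1"] by simp

lemma QB_zero: "QB B 0"
  unfolding QB_def by (intro exI[of _ "\<lambda>b. 0"]) auto

lemma QB_sum: "finite A \<Longrightarrow> finite B \<Longrightarrow> (\<And>a. a \<in> A \<Longrightarrow> QB B (f a)) \<Longrightarrow> QB B (\<Sum>a\<in>A. f a)"
proof (induction A rule: finite_induct)
  case empty then show ?case by (simp add: QB_zero)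
next
  case (insert x F) then show ?case by (simp add: QB_add)
qed

lemma QB_coord:
  assumes "\<forall>b\<in>B. \<forall>i. b$i \<in> \<int>" "QB B x" shows "x$i \<in> \<rat>"
proof -
  obtain c where c: "\<forall>b\<in>B. c b \<in> \<rat>" "x = (\<Sum>b\<in>B. c b *\<^sub>R b)" using assms QB_def by blast
  have "x$i = (\<Sum>b\<in>B. c b * b$i)" using c by (simp add: sum_component)
  also have "\<dots> \<in> \<rat>"
  proof (rule Rats_sum)
    fix b assume "b \<in> B"
    then have "c b \<in> \<rat>" "b$i \<in> \<rat>" using c assms Ints_subset_Rats by auto
    then show "c b * b$i \<in> \<rat>" by (rule Rats_mult)
  qed
  finally show ?thesis .
qed

lemma subspace_coord0: "subspace {x::real^'n. \<forall>i\<in>Z. x$i = 0}"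
  unfolding subspace_def by auto

lemma elim_one:
  assumes B: "finite B" "\<forall>b\<in>B. \<forall>i. b$i \<in> \<int>"
    and S: "finite S" "\<forall>s\<in>S. QB B s"
  shows "\<exists>S'. finite S' \<and> (\<forall>s\<in>S'. QB B s) \<and> span S' = span S \<inter> {x. x$i = 0}"
proof (cases "\<forall>s\<in>S. s$i = 0")
  case True
  have "span S \<subseteq> {x. \<forall>j\<in>{i}. x$j = 0}"
    by (rule span_minimal[OF _ subspace_coord0]) (use True in auto)
  then show ?thesis using S by (intro exI[of _ S]) auto
next
  case False
  then obtain t where t: "t \<in> S" "t$i \<noteq> 0" by auto
  define g where "g s = s - (s$i / t$i) *\<^sub>R t" for s
  have gi: "g s $ i = 0" for s using t by (simp add: g_def)
  have gS: "g s \<in> span S" if "s \<in> S" for s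
    unfolding g_def using that t by (intro span_diff span_scale span_base)
  have gQ: "QB B (g s)" if "s \<in> S" for s
  proof -
    have "s$i / t$i \<in> \<rat>" using QB_coord[OF B(2)] S that t by (intro Rats_divide) auto
    then show ?thesis unfolding g_def using S that t B by (intro QB_diff QB_scale) auto
  qed
  have "span (g ` S) = span S \<inter> {x. x$i = 0}"
  proof
    have "span (g ` S) \<subseteq> {x. \<forall>j\<in>{i}. x$j = 0}"
      by (rule span_minimal[OF _ subspace_coord0]) (auto simp: gi)
    moreover have "span (g ` S) \<subseteq> span S"
      using gS by (metis image_subsetI span_minimal subspace_span)
    ultimately show "span (g ` S) \<subseteq> span S \<inter> {x. x$i = 0}" by auto
  next
    show "span S \<inter> {x. x$i = 0} \<subseteq> span (g ` S)"
    proof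
      fix x assume x: "x \<in> span S \<inter> {x. x$i = 0}"
      then obtain u where u: "x = (\<Sum>v\<in>S. u v *\<^sub>R v)" using span_finite[OF S(1)] by auto
      have "(\<Sum>v\<in>S. u v *\<^sub>R g v) = x - ((\<Sum>v\<in>S. u v * v$i) / t$i) *\<^sub>R t"
        by (simp add: g_def u scaleR_diff_right sum_subtractf scaleR_sum_right scaleR_sum_left sum_divide_distrib)
      also have "(\<Sum>v\<in>S. u v * v$i) = x$i" by (simp add: u sum_component)
      finally have "x = (\<Sum>v\<in>S. u v *\<^sub>R g v)" using x by simp
      also have "\<dots> \<in> span (g ` S)" by (intro span_sum span_scale span_base) auto
      finally show "x \<in> span (g ` S)" .
    qed
  qed
  then show ?thesis using S gQ by (intro exI[of _ "g ` S"]) auto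
qed

lemma elim_many:
  assumes B: "finite B" "\<forall>b\<in>B. \<forall>i. b$i \<in> \<int>"
    and S: "finite S" "\<forall>s\<in>S. QB B s" and Z: "finite Z"
  shows "\<exists>S'. finite S' \<and> (\<forall>s\<in>S'. QB B s) \<and> span S' = span S \<inter> {x. \<forall>i\<in>Z. x$i = 0}"
  using Z
proof (induction Z rule: finite_induct)
  case empty then show ?case using S by auto
next
  case (insert j Z)
  then obtain S' where S': "finite S'" "\<forall>s\<in>S'. QB B s" "span S' = span S \<inter> {x. \<forall>i\<in>Z. x$i = 0}" by auto
  from elim_one[OF B S'(1,2), of j] obtain S'' where
    "finite S''" "\<forall>s\<in>S''. QB B s" "span S'' = span S' \<inter> {x. x$j = 0}" by auto
  then show ?case using S' by (intro exI[of _ S'']) auto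
qed

lemma rat_seq:
  fixes a :: real
  shows "\<exists>r. (\<forall>k. r k \<in> \<rat>) \<and> r \<longlonglongrightarrow> a"
proof -
  have "\<forall>k. \<exists>q\<in>\<rat>. a < q \<and> q < a + 1 / real (Suc k)"
    by (intro allI Rats_dense_in_real) simp
  then obtain r where r: "\<And>k. r k \<in> \<rat> \<and> a < r k \<and> r k < a + 1 / real (Suc k)"
    by metis
  have l: "(\<lambda>k. a + 1 / real (Suc k)) \<longlonglongrightarrow> a"
    using tendsto_add[OF tendsto_const LIMSEQ_inverse_real_of_nat, of a]
    by (simp add: inverse_eq_divide)
  have "r \<longlonglongrightarrow> a"
  proof (rule tendsto_sandwich[OF _ _ tendsto_const l])
    show "\<forall>\<^sub>F n in sequentially. a \<le> r n" using r by (intro always_eventually allI) (meson less_imp_le)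
    show "\<forall>\<^sub>F n in sequentially. r n \<le> a + 1 / real (Suc n)" using r by (intro always_eventually allI) (meson less_imp_le)
  qed
  thus ?thesis using r by blast
qed

lemma clear_denoms:
  fixes c :: "'a \<Rightarrow> real"
  assumes "finite A" "\<forall>a\<in>A. c a \<in> \<rat>"
  shows "\<exists>m::nat. m > 0 \<and> (\<forall>a\<in>A. real m * c a \<in> \<int>)"
  using assms
proof (induction A rule: finite_induct)
  case empty
  then show ?case by (intro exI[of _ 1]) auto
next
  case (insert x F)
  then obtain m where m: "m > 0" "\<forall>a\<in>F. real m * c a \<in> \<int>" by auto
  have "c x \<in> \<rat>" using insert by auto
  then obtain p d :: int where pd0: "d > 0" "c x = of_int p / of_int d"
    by (auto elim!: Rats_cases')
  define dn where "dn = nat d"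
  have pd: "dn > 0" "c x = of_int p / of_nat dn" using pd0 by (auto simp: dn_def)

  show ?case
  proof (intro exI[of _ "m * dn"] conjI ballI)
    show "m * dn > 0" using m pd by simp
    fix a assume "a \<in> insert x F"
    then show "real (m * dn) * c a \<in> \<int>"
    proof
      assume "a = x" then show ?thesis using pd by simp
    next
      assume "a \<in> F"
      then have "real m * c a \<in> \<int>" using m by auto
      then have "real dn * (real m * c a) \<in> \<int>" using Ints_mult Ints_of_nat by blast
      then show ?thesis by (simp add: algebra_simps)
    qed
  qed
qed
lemma span_sign:
  fixes L :: "(real^'n) set"
  assumes "is_lattice L" "u \<in> span L"
  shows "\<exists>v\<in>L. \<forall>i. sgn (v$i) = sgn (u$i)"
proof -
  obtain B where B: "finite B" "independent B" "\<forall>b\<in>B. \<forall>i. b$i \<in> \<int>"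
    and LB: "L = {(\<Sum>b\<in>B. c b *\<^sub>R b) | c. \<forall>b\<in>B. c b \<in> \<int>}"
    using assms(1) unfolding is_lattice_def by blast
  have "L \<subseteq> span B" unfolding LB
  proof clarify
    fix c :: "real^'n \<Rightarrow> real"
    show "(\<Sum>b\<in>B. c b *\<^sub>R b) \<in> span B"
      by (rule span_sum, rule span_scale, rule span_base) simp
  qed
  then have "span L \<subseteq> span B" by (metis span_minimal subspace_span)
  then have uB: "u \<in> span B" using assms(2) by auto
  have QBB: "\<forall>s\<in>B. QB B s"
  proof
    fix s assume s: "s \<in> B"
    have "(\<Sum>b\<in>B. (if b = s then 1 else 0) *\<^sub>R b) = (\<Sum>b\<in>B. if b = s then b else 0)"
      by (rule sum.cong) auto
    also have "\<dots> = s" using s B(1) by simp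
    finally have "s = (\<Sum>b\<in>B. (if b = s then 1 else 0) *\<^sub>R b)" by simp
    then show "QB B s" unfolding QB_def by (intro exI[of _ "\<lambda>b. if b = s then 1 else 0"]) auto
  qed
  define Z where "Z = {i. u$i = 0}"
  obtain S' where S': "finite S'" "\<forall>s\<in>S'. QB B s" "span S' = span B \<inter> {x. \<forall>i\<in>Z. x$i = 0}"
    using elim_many[OF B(1,3) B(1) QBB, of Z] by auto
  have "u \<in> span S'" using S'(3) uB by (auto simp: Z_def)
  then obtain a where a: "u = (\<Sum>s\<in>S'. a s *\<^sub>R s)" using span_finite[OF S'(1)] by auto
  have "\<forall>s. \<exists>r. (\<forall>k. r k \<in> \<rat>) \<and> r \<longlonglongrightarrow> a s" using rat_seq by blast
  then obtain r where r: "\<And>s. (\<forall>k. r s k \<in> \<rat>) \<and> r s \<longlonglongrightarrow> a s" by metis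
  define q where "q k = (\<Sum>s\<in>S'. r s k *\<^sub>R s)" for k
  have qlim: "q \<longlonglongrightarrow> u" unfolding q_def a
    by (intro tendsto_sum tendsto_scaleR tendsto_const) (use r in auto)
  have qQ: "QB B (q k)" for k unfolding q_def
    using S' r B(1) by (intro QB_sum QB_scale) auto
  have qS: "q k \<in> span S'" for k unfolding q_def by (intro span_sum span_scale span_base)
  have qZ: "q k $ i = 0" if "i \<in> Z" for k i using qS[of k] S'(3) that by auto
  have "eventually (\<lambda>k. \<forall>i. u$i \<noteq> 0 \<longrightarrow> sgn (q k $ i) = sgn (u$i)) sequentially"
  proof (rule eventually_all_finite)
    fix i
    have l: "(\<lambda>k. q k $ i) \<longlonglongrightarrow> u $ i" using qlim by (rule tendsto_vec_nth)
    show "eventually (\<lambda>k. u$i \<noteq> 0 \<longrightarrow> sgn (q k $ i) = sgn (u$i)) sequentially"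
    proof (cases "u$i > 0")
      case True
      then have "eventually (\<lambda>k. 0 < q k $ i) sequentially" using order_tendstoD(1)[OF l] by blast
      then show ?thesis by eventually_elim (use True in auto)
    next
      case False
      show ?thesis
      proof (cases "u$i < 0")
        case True
        then have "eventually (\<lambda>k. q k $ i < 0) sequentially" using order_tendstoD(2)[OF l] by blast
        then show ?thesis by eventually_elim (use True in auto)
      next
        case False
        then show ?thesis using \<open>\<not> u$i > 0\<close> by auto
      qed
    qed
  qed
  then obtain N where N: "\<forall>n\<ge>N. \<forall>i. u$i \<noteq> 0 \<longrightarrow> sgn (q n $ i) = sgn (u$i)"
    unfolding eventually_sequentially by blast
  define k where "k = N"
  have k: "\<And>i. u$i \<noteq> 0 \<Longrightarrow> sgn (q k $ i) = sgn (u$i)" using N k_def by blast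
  have sq: "sgn (q k $ i) = sgn (u$i)" for i
    using k[of i] qZ[of i k] by (cases "u$i = 0") (auto simp: Z_def)
  obtain c where c: "\<forall>b\<in>B. c b \<in> \<rat>" "q k = (\<Sum>b\<in>B. c b *\<^sub>R b)" using qQ[of k] QB_def by blast
  obtain m :: nat where m: "m > 0" "\<forall>b\<in>B. real m * c b \<in> \<int>" using clear_denoms[OF B(1) c(1)] by blast
  define v where "v = real m *\<^sub>R q k"
  have "v = (\<Sum>b\<in>B. (real m * c b) *\<^sub>R b)" unfolding v_def c(2) by (simp add: scaleR_sum_right)
  then have "v \<in> L" unfolding LB using m(2) by (intro CollectI exI[of _ "\<lambda>b. real m * c b"]) simp
  moreover have "sgn (v$i) = sgn (u$i)" for i
    using m(1) sq[of i] by (simp add: v_def sgn_mult)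
  ultimately show ?thesis by blast
qed

lemma ip_axis:
  fixes ip :: "real^'n \<Rightarrow> real^'n \<Rightarrow> real"
  assumes ip: "is_inner_product ip" and orth: "\<forall>i j. i \<noteq> j \<longrightarrow> ip (axis i 1) (axis j 1) = 0"
  shows "ip y (axis i 1) = ip (axis i 1) (axis i 1) * y$i"
proof -
  have bl: "bilinear ip" using ip unfolding is_inner_product_def by auto
  have "ip y (axis i 1) = ip (\<Sum>j\<in>UNIV. y$j *\<^sub>R axis j 1) (axis i 1)"
    using basis_expansion[of y] by (simp add: scalar_mult_eq_scaleR)
  also have "\<dots> = (\<Sum>j\<in>UNIV. y$j * ip (axis j 1) (axis i 1))"
    using bilinear_sum[OF bl, of "\<lambda>j. y$j *\<^sub>R axis j 1" UNIV "\<lambda>_. axis i 1" "{()}"]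
    by (simp add: bilinear_lmul[OF bl] sum.cartesian_product[symmetric])
  also have "\<dots> = (\<Sum>j\<in>UNIV. if j = i then y$j * ip (axis j 1) (axis i 1) else 0)"
    using orth by (intro sum.cong) auto
  also have "\<dots> = ip (axis i 1) (axis i 1) * y$i" by simp
  finally show ?thesis .
qed

lemma ip_pos:
  fixes ip :: "real^'n \<Rightarrow> real^'n \<Rightarrow> real"
  assumes ip: "is_inner_product ip"
  shows "ip (axis i 1) (axis i 1) > 0"
  using ip unfolding is_inner_product_def by (simp add: axis_eq_0_iff)

lemma ip_form:
  fixes ip :: "real^'n \<Rightarrow> real^'n \<Rightarrow> real"
  assumes ip: "is_inner_product ip" and orth: "\<forall>i j. i \<noteq> j \<longrightarrow> ip (axis i 1) (axis j 1) = 0"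
  shows "ip x y = (\<Sum>i\<in>UNIV. ip (axis i 1) (axis i 1) * x$i * y$i)"
proof -
  have bl: "bilinear ip" using ip unfolding is_inner_product_def by auto
  have sym: "ip a b = ip b a" for a b using ip unfolding is_inner_product_def by auto
  have "ip x y = ip (\<Sum>j\<in>UNIV. x$j *\<^sub>R axis j 1) y"
    using basis_expansion[of x] by (simp add: scalar_mult_eq_scaleR)
  also have "\<dots> = (\<Sum>j\<in>UNIV. x$j * ip (axis j 1) y)"
    using bilinear_sum[OF bl, of "\<lambda>j. x$j *\<^sub>R axis j 1" UNIV "\<lambda>_. y" "{()}"]
    by (simp add: bilinear_lmul[OF bl] sum.cartesian_product[symmetric])
  also have "\<dots> = (\<Sum>i\<in>UNIV. ip (axis i 1) (axis i 1) * x$i * y$i)"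
  proof (intro sum.cong refl)
    fix j
    have "ip (axis j 1) y = ip y (axis j 1)" by (rule sym)
    also have "\<dots> = ip (axis j 1) (axis j 1) * y$j" by (rule ip_axis[OF ip orth])
    finally show "x$j * ip (axis j 1) y = ip (axis j 1) (axis j 1) * x$j * y$j" by simp
  qed
  finally show ?thesis .
qed

definition isproj where
  "isproj ip F x p \<longleftrightarrow> p \<in> F \<and> (\<forall>y\<in>F. ip (x - p) y = 0)"

lemma proj_unique:
  fixes ip :: "real^'n \<Rightarrow> real^'n \<Rightarrow> real"
  assumes ip: "is_inner_product ip" and F: "subspace F"
    and "isproj ip F x p" "isproj ip F x q"
  shows "p = q"
proof -
  have bl: "bilinear ip" using ip unfolding is_inner_product_def by auto
  have pq: "p - q \<in> F" using assms F by (auto simp: isproj_def subspace_diff)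
  have "ip (p - q) (p - q) = ip (x - q) (p - q) - ip (x - p) (p - q)"
  proof -
    have "p - q = (x - q) - (x - p)" by simp
    then show ?thesis using bilinear_lsub[OF bl, of "x - q" "x - p" "p - q"] by simp
  qed
  also have "\<dots> = 0" using assms pq by (simp add: isproj_def)
  finally have "ip (p - q) (p - q) = 0" .
  moreover have "p - q \<noteq> 0 \<Longrightarrow> ip (p - q) (p - q) > 0" using ip unfolding is_inner_product_def by blast
  ultimately show ?thesis by force
qed

lemma proj_exists:
  fixes ip :: "real^'n \<Rightarrow> real^'n \<Rightarrow> real"
  assumes ip: "is_inner_product ip" and orth: "\<forall>i j. i \<noteq> j \<longrightarrow> ip (axis i 1) (axis j 1) = 0"
    and F: "subspace F"
  shows "\<exists>p. isproj ip F x p"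
proof -
  have bl: "bilinear ip" using ip unfolding is_inner_product_def by auto
  define d where "d i = ip (axis i 1) (axis i 1)" for i
  have dpos: "d i > 0" for i using ip_pos[OF ip] by (simp add: d_def)
  define S where "S v = (\<chi> i. sqrt (d i) * v$i)" for v :: "real^'n"
  have linS: "linear S"
    by (rule linearI) (simp_all add: S_def vec_eq_iff algebra_simps)
  have ipS: "ip a b = S a \<bullet> S b" for a b
  proof -
    have "S a \<bullet> S b = (\<Sum>i\<in>UNIV. sqrt (d i) * a$i * (sqrt (d i) * b$i))"
      by (simp add: S_def inner_vec_def)
    also have "\<dots> = (\<Sum>i\<in>UNIV. d i * a$i * b$i)"
    proof (intro sum.cong refl)
      fix i
      have "sqrt (d i) * a$i * (sqrt (d i) * b$i) = (sqrt (d i) * sqrt (d i)) * a$i * b$i" by (simp only: mult_ac)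
      also have "sqrt (d i) * sqrt (d i) = d i" using dpos[of i] by simp
      finally show "sqrt (d i) * a$i * (sqrt (d i) * b$i) = d i * a$i * b$i" .
    qed
    finally show ?thesis using ip_form[OF ip orth, of a b] by (simp add: d_def)
  qed
  obtain y z where yz: "y \<in> span (S ` F)" "\<And>w. w \<in> span (S ` F) \<Longrightarrow> orthogonal z w" "S x = y + z"
    using orthogonal_subspace_decomp_exists by metis
  have SF: "span (S ` F) = S ` F" using span_linear_image[OF linS, of F] F span_eq_iff by metis
  obtain p where p: "p \<in> F" "y = S p" using yz(1) unfolding SF by blast
  have "ip (x - p) q = 0" if "q \<in> F" for q
  proof -
    have "ip (x - p) q = (S x - S p) \<bullet> S q" using ipS linear_diff[OF linS] by simp
    also have "\<dots> = z \<bullet> S q" using yz(3) p by simp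
    also have "\<dots> = 0" using yz(2)[of "S q"] SF that imageI
      unfolding orthogonal_def by metis
    finally show ?thesis .
  qed
  then show ?thesis using p unfolding isproj_def by blast
qed

lemma orth_proj_char:
  fixes ip :: "real^'n \<Rightarrow> real^'n \<Rightarrow> real"
  assumes ip: "is_inner_product ip" and orth: "\<forall>i j. i \<noteq> j \<longrightarrow> ip (axis i 1) (axis j 1) = 0"
    and F: "subspace F"
  shows "isproj ip F x (orth_proj ip F x)" and "isproj ip F x p \<Longrightarrow> orth_proj ip F x = p"
proof -
  have ex1: "\<exists>!p. isproj ip F x p"
    using proj_exists[OF ip orth F] proj_unique[OF ip F] by blast
  show "isproj ip F x (orth_proj ip F x)"
    using theI'[OF ex1] unfolding orth_proj_def isproj_def by simp
  show "isproj ip F x p \<Longrightarrow> orth_proj ip F x = p"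
    using the1_equality[OF ex1] unfolding orth_proj_def isproj_def by simp
qed
lemma lin_sub_sum:
  fixes F :: "(real^'n) set"
  assumes F: "subspace F" and f: "linear_on_subspace F f" and A: "finite A"
    and z: "\<forall>a\<in>A. z a \<in> F"
  shows "f (\<Sum>a\<in>A. c a *\<^sub>R z a) = (\<Sum>a\<in>A. c a * f (z a))"
  using A z
proof (induction A rule: finite_induct)
  case empty
  have "f (0 *\<^sub>R 0) = 0 * f 0" using f subspace_0[OF F] unfolding linear_on_subspace_def by blast
  then show ?case by simp
next
  case (insert x A)
  have s: "(\<Sum>a\<in>A. c a *\<^sub>R z a) \<in> F" using insert F by (intro subspace_sum subspace_scale) auto
  have zx: "c x *\<^sub>R z x \<in> F" "z x \<in> F" using insert F by (auto intro: subspace_scale)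
  have "f (\<Sum>a\<in>insert x A. c a *\<^sub>R z a) = f (c x *\<^sub>R z x + (\<Sum>a\<in>A. c a *\<^sub>R z a))"
    using insert by simp
  also have "\<dots> = f (c x *\<^sub>R z x) + f (\<Sum>a\<in>A. c a *\<^sub>R z a)"
    using f s zx unfolding linear_on_subspace_def by blast
  also have "f (c x *\<^sub>R z x) = c x * f (z x)" using f zx unfolding linear_on_subspace_def by blast
  finally show ?case using insert by simp
qed

theorem corollary1:
  fixes L :: "(real^'n) set" and ip :: "real^'n \<Rightarrow> real^'n \<Rightarrow> real"
  assumes "is_lattice L"
    and "is_inner_product ip"
    and "\<forall>i j. i \<noteq> j \<longrightarrow> ip (axis i 1) (axis j 1) = 0"
    and "zonotopal_lattice L"
  shows "{(\<lambda>i. sgn (v$i)) | v. v \<in> L} =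
         {(\<lambda>i. sgn (f (orth_proj ip (span L) (axis i 1)))) | f. linear_on_subspace (span L) f}"
proof -
  note ip = assms(2) and orth = assms(3)
  define F where "F = span L"
  have F: "subspace F" by (simp add: F_def)
  define P where "P = orth_proj ip F"
  have bl: "bilinear ip" using ip unfolding is_inner_product_def by auto
  have sym: "ip a b = ip b a" for a b using ip unfolding is_inner_product_def by auto
  have P1: "P x \<in> F" "\<And>y. y \<in> F \<Longrightarrow> ip (x - P x) y = 0" for x
    using orth_proj_char(1)[OF ip orth F, of x] unfolding P_def isproj_def by auto
  have P2: "isproj ip F x p \<Longrightarrow> P x = p" for x p
    using orth_proj_char(2)[OF ip orth F] unfolding P_def by blast
  have key: "ip z (P x) = ip z x" if "z \<in> F" for z x
  proof -
    have "ip (x - P x) z = 0" using P1(2) that by blast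
    then have "ip x z = ip (P x) z" using bilinear_lsub[OF bl] by simp
    then show ?thesis using sym by metis
  qed
  define d where "d i = ip (axis i 1) (axis i 1)" for i
  have dpos: "d i > 0" for i using ip_pos[OF ip] by (simp add: d_def)
  have ipax: "ip y (axis i 1) = d i * y$i" for y i unfolding d_def by (rule ip_axis[OF ip orth])
  have Pid: "P y = y" if "y \<in> F" for y
    using that by (intro P2) (simp add: isproj_def bilinear_lzero[OF bl])
  have Psum: "P (\<Sum>j\<in>UNIV. a j *\<^sub>R axis j 1) = (\<Sum>j\<in>UNIV. a j *\<^sub>R P (axis j 1))" for a
  proof (rule P2)
    have "(\<Sum>j\<in>UNIV. a j *\<^sub>R axis j 1) - (\<Sum>j\<in>UNIV. a j *\<^sub>R P (axis j 1))
        = (\<Sum>j\<in>UNIV. a j *\<^sub>R (axis j 1 - P (axis j 1)))"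
      by (simp add: scaleR_diff_right sum_subtractf)
    moreover have "ip (\<Sum>j\<in>UNIV. a j *\<^sub>R (axis j 1 - P (axis j 1))) y = 0" if "y \<in> F" for y
    proof -
      have lin: "linear (\<lambda>x. ip x y)" using bl unfolding bilinear_def by blast
      have "ip (\<Sum>j\<in>UNIV. a j *\<^sub>R (axis j 1 - P (axis j 1))) y
          = (\<Sum>j\<in>UNIV. ip (a j *\<^sub>R (axis j 1 - P (axis j 1))) y)"
        using linear_sum[OF lin] by (simp add: o_def)
      also have "\<dots> = (\<Sum>j\<in>UNIV. a j * ip (axis j 1 - P (axis j 1)) y)"
        by (simp add: bilinear_lmul[OF bl])
      also have "\<dots> = 0" using P1(2)[OF that] by simp
      finally show ?thesis .
    qed
    moreover have "(\<Sum>j\<in>UNIV. a j *\<^sub>R P (axis j 1)) \<in> F"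
      using F P1(1) by (intro subspace_sum subspace_scale) auto
    ultimately show "isproj ip F (\<Sum>j\<in>UNIV. a j *\<^sub>R axis j 1) (\<Sum>j\<in>UNIV. a j *\<^sub>R P (axis j 1))"
      unfolding isproj_def by simp
  qed
  show ?thesis
    unfolding F_def[symmetric] P_def[symmetric]
  proof (rule equalityI; rule subsetI)
    fix s assume "s \<in> {(\<lambda>i. sgn (v$i)) | v. v \<in> L}"
    then obtain v where v: "v \<in> L" "s = (\<lambda>i. sgn (v$i))" by blast
    have vF: "v \<in> F" unfolding F_def using v(1) by (rule span_base)
    define f where "f x = ip v x" for x
    have lin: "linear (\<lambda>x. ip v x)" using bl unfolding bilinear_def by blast
    have "linear_on_subspace F f"
      unfolding linear_on_subspace_def f_def using linear_add[OF lin] linear_scale[OF lin] by simp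
    moreover have "s = (\<lambda>i. sgn (f (P (axis i 1))))"
    proof
      fix i
      have "f (P (axis i 1)) = d i * v$i" unfolding f_def using key[OF vF] ipax by simp
      then show "s i = sgn (f (P (axis i 1)))" using v(2) dpos[of i] by (simp add: sgn_mult)
    qed
    ultimately show "s \<in> {(\<lambda>i. sgn (f (P (axis i 1)))) | f. linear_on_subspace F f}" by blast
  next
    fix s assume "s \<in> {(\<lambda>i. sgn (f (P (axis i 1)))) | f. linear_on_subspace F f}"
    then obtain f where f: "linear_on_subspace F f" "s = (\<lambda>i. sgn (f (P (axis i 1))))" by blast
    define c where "c i = f (P (axis i 1))" for i
    define w where "w = (\<chi> i. c i / d i)"
    define u where "u = P w"
    have uF: "u \<in> F" unfolding u_def by (rule P1(1))
    have uc: "d i * u$i = c i" for i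
    proof -
      have "d i * u$i = ip u (axis i 1)" by (simp add: ipax)
      also have "\<dots> = ip u (P (axis i 1))" using key[OF uF] by simp
      also have "\<dots> = ip (P (axis i 1)) u" by (rule sym)
      also have "\<dots> = ip (P (axis i 1)) w" unfolding u_def by (rule key[OF P1(1)])
      also have "\<dots> = (\<Sum>j\<in>UNIV. d j * P (axis i 1) $ j * w $ j)"
        unfolding d_def by (rule ip_form[OF ip orth])
      also have "\<dots> = (\<Sum>j\<in>UNIV. P (axis i 1) $ j * f (P (axis j 1)))"
      proof (intro sum.cong refl)
        fix j
        show "d j * P (axis i 1) $ j * w $ j = P (axis i 1) $ j * f (P (axis j 1))"
          using dpos[of j] by (simp add: w_def c_def)
      qed
      also have "\<dots> = f (\<Sum>j\<in>UNIV. P (axis i 1) $ j *\<^sub>R P (axis j 1))"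
        by (rule lin_sub_sum[OF F f(1), symmetric]) (auto intro: P1(1))
      also have "(\<Sum>j\<in>UNIV. P (axis i 1) $ j *\<^sub>R P (axis j 1)) = P (\<Sum>j\<in>UNIV. P (axis i 1) $ j *\<^sub>R axis j 1)"
        by (rule Psum[symmetric])
      also have "(\<Sum>j\<in>UNIV. P (axis i 1) $ j *\<^sub>R axis j 1) = P (axis i 1)"
        using basis_expansion[of "P (axis i 1)"] by (simp add: scalar_mult_eq_scaleR)
      also have "P (P (axis i 1)) = P (axis i 1)" by (rule Pid[OF P1(1)])
      finally show ?thesis by (simp add: c_def)
    qed
    obtain v where v: "v \<in> L" "\<forall>i. sgn (v$i) = sgn (u$i)"
      using span_sign[OF assms(1), of u] uF unfolding F_def by blast
    have "s = (\<lambda>i. sgn (v$i))"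
    proof
      fix i
      have "sgn (c i) = sgn (u$i)" using uc[of i, symmetric] dpos[of i] by (simp add: sgn_mult)
      then show "s i = sgn (v$i)" using f(2) v(2) by (simp add: c_def)
    qed
    then show "s \<in> {(\<lambda>i. sgn (v$i)) | v. v \<in> L}" using v(1) by blast
  qed
qed
end
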